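(* The map $f:\mathbb{C}H^n\to\mathbb{C}^n$ given by $$f(z_1,\dots,z_n)=\left(\frac{z_1}{\sqrt{1-\sum_{i=1}^n|z_i|^2}},\dots,\frac{z_n}{\sqrt{1-\sum_{i=1}^n|z_i|^2}}\right)$$ is a special global diffeomorphism satisfying $f^*(\omega_0)=\omega_{hyp}$ and $f^*(\omega_{FS})=\omega_0$, where in the second equation $\omega_0$ denotes the restriction of the flat form to $\mathbb{C}H^n\subset\mathbb{C}^n$ and $\omega_{FS}$ is the restriction of the Fubini–Study form to the affine chart $\mathbb{C}^n=\{Z_0\neq0\}\subset\mathbb{C}P^n$.
   Context: $\mathbb{C}H^n=\{z\in\mathbb{C}^n:\sum_j|z_j|^2<1\}$ with $\omega_{hyp}=-\frac{i}{2}\partial\bar\partial\log(1-\sum_j|z_j|^2)$; $\omega_0=\frac{i}{2}\sum_j dz_j\wedge d\bar z_j$; on the affine chart $Z_0\neq0$ of $\mathbb{C}P^n$ with coordinates $z_j=Z_j/Z_0$, $\omega_{FS}=\frac{i}{2}\partial\bar\partial\log(1+\sum_j|z_j|^2)$. A smooth map $\Psi$ between domains of $\mathbb{C}^n$ is called special if it has the form $\Psi(z)=(\tilde\psi_1(x)z_1,\dots,\tilde\psi_n(x)z_n)$ with $x_j=|z_j|^2$ and $\tilde\psi_j$ real-valued functions of $x=(x_1,\dots,x_n)$. *)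

theory Defs
  imports "HOL-Analysis.Analysis"
begin

fun Ck_on :: "nat \<Rightarrow> ('a::real_normed_vector \<Rightarrow> 'b::real_normed_vector) \<Rightarrow> 'a set \<Rightarrow> bool" where
  "Ck_on 0 f S = continuous_on S f"
| "Ck_on (Suc k) f S =
     (f differentiable_on S \<and> (\<forall>v. Ck_on k (\<lambda>x. frechet_derivative f (at x) v) S))"

definition smooth_on :: "('a::real_normed_vector \<Rightarrow> 'b::real_normed_vector) \<Rightarrow> 'a set \<Rightarrow> bool" where
  "smooth_on f S \<longleftrightarrow> (\<forall>k. Ck_on k f S)"

definition diffeo_between :: "('a::real_normed_vector \<Rightarrow> 'b::real_normed_vector) \<Rightarrow> 'a set \<Rightarrow> 'b set \<Rightarrow> bool" where
  "diffeo_between f U V \<longleftrightarrow> bij_betw f U V \<and> smooth_on f U \<and> smooth_on (inv_into U f) V"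

definition sqnorm :: "complex^'n::finite \<Rightarrow> real" where
  "sqnorm z = (\<Sum>j\<in>UNIV. (cmod (z$j))^2)"

definition CH :: "(complex^'n::finite) set" where
  "CH = {z. sqnorm z < 1}"

definition fmap :: "complex^'n::finite \<Rightarrow> complex^'n" where
  "fmap z = (\<chi> j. z$j / complex_of_real (sqrt (1 - sqnorm z)))"

definition special_on :: "(complex^'n::finite) set \<Rightarrow> (complex^'n \<Rightarrow> complex^'n) \<Rightarrow> bool" where
  "special_on U \<Psi> \<longleftrightarrow> smooth_on \<Psi> U \<and>
     (\<exists>\<psi> :: 'n \<Rightarrow> real^'n \<Rightarrow> real.
        \<forall>z\<in>U. \<Psi> z = (\<chi> j. complex_of_real (\<psi> j (\<chi> i. (cmod (z$i))^2)) * z$j))"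

type_synonym 'n form2 = "complex^'n \<Rightarrow> complex^'n \<Rightarrow> complex^'n \<Rightarrow> complex"

definition dirderiv :: "(complex^'n::finite \<Rightarrow> complex) \<Rightarrow> complex^'n \<Rightarrow> complex^'n \<Rightarrow> complex" where
  "dirderiv g p w = frechet_derivative g (at p) w"

definition wirt_z :: "'n::finite \<Rightarrow> (complex^'n \<Rightarrow> complex) \<Rightarrow> complex^'n \<Rightarrow> complex" where
  "wirt_z j g p = (dirderiv g p (axis j 1) - \<i> * dirderiv g p (axis j \<i>)) / 2"

definition wirt_zbar :: "'n::finite \<Rightarrow> (complex^'n \<Rightarrow> complex) \<Rightarrow> complex^'n \<Rightarrow> complex" where
  "wirt_zbar j g p = (dirderiv g p (axis j 1) + \<i> * dirderiv g p (axis j \<i>)) / 2"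

definition dz :: "'n::finite \<Rightarrow> complex^'n \<Rightarrow> complex" where "dz j u = u$j"
definition dzbar :: "'n::finite \<Rightarrow> complex^'n \<Rightarrow> complex" where "dzbar j u = cnj (u$j)"
definition wedge :: "('a \<Rightarrow> complex) \<Rightarrow> ('a \<Rightarrow> complex) \<Rightarrow> 'a \<Rightarrow> 'a \<Rightarrow> complex" where
  "wedge \<alpha> \<beta> u v = \<alpha> u * \<beta> v - \<alpha> v * \<beta> u"

definition i_ddbar :: "(complex^'n::finite \<Rightarrow> real) \<Rightarrow> 'n form2" where
  "i_ddbar \<phi> p u v = \<i> / 2 * (\<Sum>j\<in>UNIV. \<Sum>k\<in>UNIV.
      wirt_z j (wirt_zbar k (\<lambda>x. complex_of_real (\<phi> x))) p * wedge (dz j) (dzbar k) u v)"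

definition omega0 :: "'n::finite form2" where
  "omega0 p u v = \<i> / 2 * (\<Sum>j\<in>UNIV. wedge (dz j) (dzbar j) u v)"

definition omega_hyp :: "'n::finite form2" where
  "omega_hyp p u v = - i_ddbar (\<lambda>z. ln (1 - sqnorm z)) p u v"

definition omega_FS :: "'n::finite form2" where
  "omega_FS = i_ddbar (\<lambda>z. ln (1 + sqnorm z))"

definition pullback :: "(complex^'n::finite \<Rightarrow> complex^'n) \<Rightarrow> 'n form2 \<Rightarrow> 'n form2" where
  "pullback F \<omega> p u v =
     \<omega> (F p) (frechet_derivative F (at p) u) (frechet_derivative F (at p) v)"

end

theory Submission
  imports Defs
begin


lemma norm_axis_gen: "norm (axis j c :: 'a::real_normed_vector^'n::finite) = norm c"
proof -
  have "\<And>i. (norm (axis j c $ i))^2 = (if i = j then (norm c)^2 else 0)"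
    by (simp add: axis_def)
  then show ?thesis unfolding norm_vec_def L2_set_def by simp
qed

lemma bl_axis: "bounded_linear (axis j :: 'a::real_normed_vector \<Rightarrow> 'a^'n::finite)"
  apply (rule bounded_linear_intro[where K=1])
    apply (auto simp: axis_def vec_eq_iff)
  by (metis axis_def norm_axis_gen order_refl)

lemma has_derivative_vec:
  fixes f :: "'a::real_normed_vector \<Rightarrow> 'b::real_normed_vector^'n::finite"
  assumes "\<And>j. ((\<lambda>x. f x $ j) has_derivative (\<lambda>w. f' w $ j)) F"
  shows "(f has_derivative f') F"
proof -
  have e1: "f = (\<lambda>x. \<Sum>j\<in>UNIV. axis j (f x $ j))"
    by (rule ext) (simp add: vec_eq_iff axis_def)
  have e2: "f' = (\<lambda>x. \<Sum>j\<in>UNIV. axis j (f' x $ j))"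
    by (rule ext) (simp add: vec_eq_iff axis_def)
  have "((\<lambda>x. \<Sum>j\<in>UNIV. axis j (f x $ j)) has_derivative (\<lambda>x. \<Sum>j\<in>UNIV. axis j (f' x $ j))) F"
    by (intro has_derivative_sum bounded_linear.has_derivative[OF bl_axis] assms)
  then show ?thesis using e1 e2 by metis
qed


definition cq :: "complex^'n::finite \<Rightarrow> complex" where
  "cq x = (\<Sum>j\<in>UNIV. x$j * cnj (x$j))"

definition dcq :: "complex^'n::finite \<Rightarrow> complex^'n \<Rightarrow> complex" where
  "dcq x w = (\<Sum>j\<in>UNIV. w$j * cnj (x$j) + x$j * cnj (w$j))"

lemma cq_sqnorm: "cq x = of_real (sqnorm x)"
  unfolding cq_def sqnorm_def of_real_sum by (simp only: complex_norm_square)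

lemma sqnorm_Re: "sqnorm x = Re (cq x)"
  by (simp add: cq_sqnorm)

lemma dcq_real: "of_real (Re (dcq x w)) = dcq x w"
proof -
  have "Im (dcq x w) = 0" unfolding dcq_def by (simp add: Im_sum)
  then show ?thesis by (simp add: complex_eq_iff)
qed

lemma cnj_dcq: "cnj (dcq x w) = dcq x w"
  by (metis Reals_cnj_iff Reals_of_real dcq_real)

lemma cq_has_derivative: "(cq has_derivative dcq x) (at x)"
  unfolding cq_def dcq_def [abs_def]
  apply (rule has_derivative_eq_rhs)
   apply (rule has_derivative_sum)
   apply (rule has_derivative_mult)
    apply (rule bounded_linear.has_derivative[OF bounded_linear_vec_nth])
    apply (rule has_derivative_ident)
   apply (rule bounded_linear.has_derivative[OF bounded_linear_cnj])
   apply (rule bounded_linear.has_derivative[OF bounded_linear_vec_nth])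
   apply (rule has_derivative_ident)
  by (simp add: algebra_simps)

lemma sqnorm_has_derivative: "(sqnorm has_derivative (\<lambda>w. Re (dcq x w))) (at x)"
proof -
  have "((\<lambda>x. Re (cq x)) has_derivative (\<lambda>w. Re (dcq x w))) (at x)"
    by (rule bounded_linear.has_derivative[OF bounded_linear_Re cq_has_derivative])
  then show ?thesis by (simp add: sqnorm_Re[abs_def])
qed

lemma sqnorm_cont: "continuous_on UNIV sqnorm"
  unfolding sqnorm_def by (intro continuous_intros)

lemma open_dom: "open {x::complex^'n::finite. 0 < c + s * sqnorm x}"
  by (intro open_Collect_less continuous_intros sqnorm_cont[THEN continuous_on_subset]) auto


lemma frechet_cong_open:
  assumes "open S" "x \<in> S" "\<And>y. y \<in> S \<Longrightarrow> f y = g y"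
  shows "frechet_derivative f (at x) = frechet_derivative g (at x)"
proof -
  have "(f has_derivative D) (at x) = (g has_derivative D) (at x)" for D
  proof
    assume "(f has_derivative D) (at x)"
    then show "(g has_derivative D) (at x)"
      by (rule has_derivative_transform_within_open[OF _ assms(1,2)]) (simp add: assms(3))
  next
    assume "(g has_derivative D) (at x)"
    then show "(f has_derivative D) (at x)"
      by (rule has_derivative_transform_within_open[OF _ assms(1,2)]) (simp add: assms(3))
  qed
  then show ?thesis unfolding frechet_derivative_def by simp
qed

lemma Ck_cong:
  assumes "open S" "\<And>y. y \<in> S \<Longrightarrow> f y = g y"
  shows "Ck_on k f S = Ck_on k g S"
  using assms(2)
proof (induction k arbitrary: f g)
  case 0
  then show ?case using continuous_on_cong by auto
next
  case (Suc k)
  have d: "f differentiable_on S \<longleftrightarrow> g differentiable_on S"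
  proof -
    have "(f differentiable at x) = (g differentiable at x)" if "x \<in> S" for x
    proof -
      have "(f has_derivative D) (at x) = (g has_derivative D) (at x)" for D
        using frechet_cong_open assms(1) that Suc.prems
      proof -
        show ?thesis
        proof
          assume "(f has_derivative D) (at x)"
          then show "(g has_derivative D) (at x)"
            by (rule has_derivative_transform_within_open[OF _ assms(1) that]) (simp add: Suc.prems)
        next
          assume "(g has_derivative D) (at x)"
          then show "(f has_derivative D) (at x)"
            by (rule has_derivative_transform_within_open[OF _ assms(1) that]) (simp add: Suc.prems)
        qed
      qed
      then show ?thesis unfolding differentiable_def by simp
    qed
    then show ?thesis unfolding differentiable_on_eq_differentiable_at[OF assms(1)] by auto
  qed
  have "\<And>v. Ck_on k (\<lambda>x. frechet_derivative f (at x) v) S = Ck_on k (\<lambda>x. frechet_derivative g (at x) v) S"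
  proof -
    fix v
    have h: "\<And>x. x \<in> S \<Longrightarrow> frechet_derivative f (at x) v = frechet_derivative g (at x) v"
      using frechet_cong_open[OF assms(1) _ Suc.prems] by auto
    show "Ck_on k (\<lambda>x. frechet_derivative f (at x) v) S = Ck_on k (\<lambda>x. frechet_derivative g (at x) v) S"
      by (rule Suc.IH, rule h)
  qed
  then show ?case using d by simp
qed

lemma Ck_class:
  assumes "open S" "P f"
    and step: "\<And>f. P f \<Longrightarrow> \<exists>f'. (\<forall>x\<in>S. (f has_derivative f' x) (at x)) \<and> (\<forall>w. P (\<lambda>x. f' x w))"
  shows "Ck_on k f S"
  using assms(2)
proof (induction k arbitrary: f)
  case 0
  obtain f' where "\<forall>x\<in>S. (f has_derivative f' x) (at x)" using step[OF 0] by blast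
  then have "\<forall>x\<in>S. isCont f x" using has_derivative_continuous by blast
  then show ?case
    by (simp add: continuous_at_imp_continuous_on)
next
  case (Suc k)
  obtain f' where f': "\<forall>x\<in>S. (f has_derivative f' x) (at x)" "\<forall>w. P (\<lambda>x. f' x w)"
    using step[OF Suc.prems] by blast
  have d: "f differentiable_on S"
    using f'(1) differentiable_at_imp_differentiable_on differentiable_def by blast
  have "Ck_on k (\<lambda>x. frechet_derivative f (at x) v) S" for v
  proof -
    have "Ck_on k (\<lambda>x. f' x v) S" using Suc.IH f'(2) by blast
    moreover have "\<And>x. x \<in> S \<Longrightarrow> frechet_derivative f (at x) v = f' x v"
      using f'(1) frechet_derivative_at by fastforce
    ultimately show ?thesis using Ck_cong[OF assms(1), of "\<lambda>x. frechet_derivative f (at x) v" "\<lambda>x. f' x v" k] by simp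
  qed
  then show ?case using d by simp
qed


inductive sm :: "real \<Rightarrow> real \<Rightarrow> (complex^'n::finite \<Rightarrow> complex) \<Rightarrow> bool" for c s where
  sm_const: "sm c s (\<lambda>x. k)"
| sm_coord: "sm c s (\<lambda>x. x$j)"
| sm_cnj: "sm c s (\<lambda>x. cnj (x$j))"
| sm_add: "sm c s f \<Longrightarrow> sm c s g \<Longrightarrow> sm c s (\<lambda>x. f x + g x)"
| sm_mult: "sm c s f \<Longrightarrow> sm c s g \<Longrightarrow> sm c s (\<lambda>x. f x * g x)"
| sm_pw: "sm c s (\<lambda>x. of_real ((c + s * sqnorm x) powr a))"

lemma sm_sum: "finite A \<Longrightarrow> (\<And>i. i \<in> A \<Longrightarrow> sm c s (f i)) \<Longrightarrow> sm c s (\<lambda>x. \<Sum>i\<in>A. f i x)"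
  by (induction A rule: finite_induct) (auto intro: sm.intros)

lemma sm_dcq: "sm c s (\<lambda>x. dcq x w)"
  unfolding dcq_def by (intro sm_sum sm.intros) auto

lemma pw_has_derivative:
  assumes "0 < c + s * sqnorm x"
  shows "((\<lambda>x. complex_of_real ((c + s * sqnorm x) powr a)) has_derivative
     (\<lambda>w. of_real (a * s) * of_real ((c + s * sqnorm x) powr (a - 1)) * dcq x w)) (at x)"
proof -
  let ?G = "c + s * sqnorm x"
  have "((\<lambda>x. (c + s * sqnorm x) powr a) has_derivative
     (\<lambda>w. ?G powr a * (0 * ln ?G + (0 + s * Re (dcq x w)) * a / ?G))) (at x)"
    by (intro has_derivative_powr has_derivative_add has_derivative_const
        has_derivative_mult_right sqnorm_has_derivative assms) auto
  then have "((\<lambda>x. complex_of_real ((c + s * sqnorm x) powr a)) has_derivative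
     (\<lambda>w. of_real (?G powr a * (0 * ln ?G + (0 + s * Re (dcq x w)) * a / ?G)))) (at x)"
    by (rule has_derivative_of_real)
  moreover have "of_real (?G powr a * (0 * ln ?G + (0 + s * Re (dcq x w)) * a / ?G)) =
     of_real (a * s) * of_real (?G powr (a - 1)) * dcq x w" for w
  proof -
    have "?G powr a * (0 * ln ?G + (0 + s * Re (dcq x w)) * a / ?G) = (a * s) * (?G powr (a - 1)) * Re (dcq x w)"
      using assms by (simp add: powr_diff field_simps)
    then show ?thesis by (metis dcq_real of_real_mult)
  qed
  ultimately show ?thesis by simp
qed

lemma sm_deriv:
  assumes "sm c s f"
  shows "\<exists>f'. (\<forall>x\<in>{x. 0 < c + s * sqnorm x}. (f has_derivative f' x) (at x)) \<and> (\<forall>w. sm c s (\<lambda>x. f' x w))"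
  using assms
proof induction
  case (sm_const k)
  show ?case by (rule exI[of _ "\<lambda>x w. 0"]) (auto intro: sm.intros)
next
  case (sm_coord j)
  show ?case
    by (rule exI[of _ "\<lambda>x w. w$j"])
      (auto intro: sm.intros bounded_linear.has_derivative[OF bounded_linear_vec_nth has_derivative_ident])
next
  case (sm_cnj j)
  show ?case
    by (rule exI[of _ "\<lambda>x w. cnj (w$j)"])
      (auto intro!: sm.intros bounded_linear.has_derivative[OF bounded_linear_cnj]
          bounded_linear.has_derivative[OF bounded_linear_vec_nth has_derivative_ident])
next
  case (sm_add f g)
  then obtain f' g' where "\<forall>x\<in>{x. 0 < c + s * sqnorm x}. (f has_derivative f' x) (at x)" "\<forall>w. sm c s (\<lambda>x. f' x w)"
     "\<forall>x\<in>{x. 0 < c + s * sqnorm x}. (g has_derivative g' x) (at x)" "\<forall>w. sm c s (\<lambda>x. g' x w)" by blast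
  then show ?case
    by (intro exI[of _ "\<lambda>x w. f' x w + g' x w"]) (auto intro: sm.intros has_derivative_add)
next
  case (sm_mult f g)
  then obtain f' g' where "\<forall>x\<in>{x. 0 < c + s * sqnorm x}. (f has_derivative f' x) (at x)" "\<forall>w. sm c s (\<lambda>x. f' x w)"
     "\<forall>x\<in>{x. 0 < c + s * sqnorm x}. (g has_derivative g' x) (at x)" "\<forall>w. sm c s (\<lambda>x. g' x w)" by blast
  note 1 = this
  have sf: "sm c s f" "sm c s g" by fact+
  have "sm c s (\<lambda>x. f x * g' x w + f' x w * g x)" for w
    using sm.sm_add[OF sm.sm_mult[OF sf(1) 1(4)[rule_format, of w]] sm.sm_mult[OF 1(2)[rule_format, of w] sf(2)]] .
  then show ?case using 1
    by (intro exI[of _ "\<lambda>x w. f x * g' x w + f' x w * g x"]) (auto intro: has_derivative_mult)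
next
  case (sm_pw a)
  have "\<forall>x\<in>{x. 0 < c + s * sqnorm x}. ((\<lambda>x. complex_of_real ((c + s * sqnorm x) powr a)) has_derivative
     (\<lambda>w. of_real (a * s) * of_real ((c + s * sqnorm x) powr (a - 1)) * dcq x w)) (at x)"
    using pw_has_derivative by blast
  moreover have "\<forall>w. sm c s (\<lambda>x. of_real (a * s) * of_real ((c + s * sqnorm x) powr (a - 1)) * dcq x w)"
    by (intro allI sm.sm_mult sm.sm_const sm.sm_pw sm_dcq)
  ultimately show ?case
    by (intro exI[of _ "\<lambda>x w. of_real (a * s) * of_real ((c + s * sqnorm x) powr (a - 1)) * dcq x w"] conjI)
qed

definition smv :: "real \<Rightarrow> real \<Rightarrow> (complex^'n::finite \<Rightarrow> complex^'n) \<Rightarrow> bool" where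
  "smv c s f \<longleftrightarrow> (\<forall>j. sm c s (\<lambda>x. f x $ j))"

lemma smv_deriv:
  fixes f :: "complex^'n::finite \<Rightarrow> complex^'n"
  assumes "smv c s f"
  shows "\<exists>f'. (\<forall>x\<in>{x. 0 < c + s * sqnorm x}. (f has_derivative f' x) (at x)) \<and> (\<forall>w. smv c s (\<lambda>x. f' x w))"
proof -
  have "\<forall>j. \<exists>g. (\<forall>x\<in>{x. 0 < c + s * sqnorm x}. ((\<lambda>x. f x $ j) has_derivative g x) (at x)) \<and> (\<forall>w. sm c s (\<lambda>x. g x w))"
    using assms sm_deriv unfolding smv_def by blast
  then obtain G :: "'n \<Rightarrow> complex^'n \<Rightarrow> complex^'n \<Rightarrow> complex" where G: "\<And>j. (\<forall>x\<in>{x. 0 < c + s * sqnorm x}. ((\<lambda>x. f x $ j) has_derivative G j x) (at x))"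
     "\<And>j w. sm c s (\<lambda>x. G j x w)"
    by metis
  show ?thesis
  proof (intro exI[of _ "\<lambda>x w. \<chi> j. G j x w"] conjI ballI allI)
    fix x :: "complex^'n" assume "x \<in> {x. 0 < c + s * sqnorm x}"
    then show "(f has_derivative (\<lambda>w. \<chi> j. G j x w)) (at x)"
      using G(1) by (intro has_derivative_vec) simp
  next
    fix w show "smv c s (\<lambda>x. \<chi> j. G j x w)" using G(2) by (simp add: smv_def)
  qed
qed

lemma smv_smooth:
  assumes "smv c s f"
  shows "smooth_on f {x. 0 < c + s * sqnorm x}"
  unfolding smooth_on_def
  using Ck_class[OF open_dom, of "smv c s", OF assms smv_deriv] by blast



definition ginv :: "complex^'n::finite \<Rightarrow> complex^'n" where
  "ginv w = (\<chi> j. w$j / complex_of_real (sqrt (1 + sqnorm w)))"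

lemma sqnorm_nonneg: "0 \<le> sqnorm x"
  unfolding sqnorm_def by (simp add: sum_nonneg)

lemma sqnorm_scale: "sqnorm (\<chi> j. x$j / complex_of_real r) = sqnorm x / r^2"
  unfolding sqnorm_def by (simp add: norm_divide power_divide sum_divide_distrib)

lemma CH_iff: "x \<in> CH \<longleftrightarrow> 0 < 1 + (-1) * sqnorm x"
  unfolding CH_def by simp

lemma sqnorm_fmap: "p \<in> CH \<Longrightarrow> sqnorm (fmap p) = sqnorm p / (1 - sqnorm p)"
  unfolding fmap_def sqnorm_scale CH_def by simp

lemma sqnorm_ginv: "sqnorm (ginv w) = sqnorm w / (1 + sqnorm w)"
  unfolding ginv_def sqnorm_scale using sqnorm_nonneg[of w] by simp

lemma ginv_CH: "ginv w \<in> CH"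
proof -
  have "sqnorm w / (1 + sqnorm w) < 1" using sqnorm_nonneg[of w] by (simp add: divide_less_eq)
  then show ?thesis unfolding CH_def by (simp add: sqnorm_ginv)
qed

lemma div_div_inv: "(r::real) \<noteq> 0 \<Longrightarrow> (a / complex_of_real r) / complex_of_real (1 / r) = a"
  by (simp add: of_real_divide)

lemma ginv_fmap: "p \<in> CH \<Longrightarrow> ginv (fmap p) = p"
proof -
  assume p: "p \<in> CH"
  let ?q = "sqnorm p"
  have q: "?q < 1" "0 \<le> ?q" using p sqnorm_nonneg unfolding CH_def by auto
  have "1 + sqnorm (fmap p) = 1 / (1 - ?q)" using q by (simp add: sqnorm_fmap[OF p] field_simps)
  then have e: "sqrt (1 + sqnorm (fmap p)) = 1 / sqrt (1 - ?q)" by (simp add: real_sqrt_divide)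
  have "sqrt (1 - ?q) > 0" using q by simp
  then show ?thesis unfolding ginv_def e
    by (simp add: vec_eq_iff fmap_def div_div_inv)
qed

lemma fmap_ginv: "fmap (ginv w) = w"
proof -
  let ?q = "sqnorm w"
  have q: "0 \<le> ?q" using sqnorm_nonneg by auto
  have "1 - sqnorm (ginv w) = 1 / (1 + ?q)" using q by (simp add: sqnorm_ginv field_simps)
  then have e: "sqrt (1 - sqnorm (ginv w)) = 1 / sqrt (1 + ?q)" by (simp add: real_sqrt_divide)
  have "sqrt (1 + ?q) > 0" using q by simp
  then show ?thesis unfolding fmap_def e
    by (simp add: vec_eq_iff ginv_def div_div_inv)
qed

lemma bij_fmap: "bij_betw fmap (CH :: (complex^'n::finite) set) UNIV"
  by (rule bij_betw_byWitness[where f'=ginv]) (use ginv_fmap fmap_ginv ginv_CH in auto)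

lemma inv_fmap: "inv_into CH fmap w = ginv w"
  by (rule inv_into_f_eq[OF bij_betw_imp_inj_on[OF bij_fmap] ginv_CH fmap_ginv])

lemma powr_mhalf: "0 < y \<Longrightarrow> y powr (-1/2) = 1 / sqrt y"
proof -
  assume y: "0 < y"
  have "y powr (-1/2) = y powr (- (1/2))" by simp
  also have "\<dots> = inverse (y powr (1/2))" by (rule powr_minus)
  also have "\<dots> = 1 / sqrt y"
  proof -
    have h: "y powr (1/2) = sqrt y" by (rule powr_half_sqrt) (use y in linarith)
    show ?thesis unfolding h by (simp add: inverse_eq_divide)
  qed
  finally show ?thesis .
qed

lemma smooth_fmap: "smooth_on fmap (CH :: (complex^'n::finite) set)"
proof -
  let ?g = "\<lambda>x::complex^'n. \<chi> j. x$j * complex_of_real ((1 + (-1) * sqnorm x) powr (-1/2))"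
  have "smv 1 (-1) ?g" unfolding smv_def vec_lambda_beta by (intro allI sm.sm_mult sm.sm_coord sm.sm_pw)
  then have sm: "smooth_on ?g {x. 0 < 1 + (-1) * sqnorm x}" by (rule smv_smooth)
  have CH: "CH = {x::complex^'n. 0 < 1 + (-1) * sqnorm x}" using CH_iff by auto
  have eq: "fmap x = ?g x" if "x \<in> CH" for x :: "complex^'n"
  proof -
    have pos: "0 < 1 - sqnorm x" using that CH_def by auto
    have "(1 + (-1) * sqnorm x) powr (-1/2) = 1 / sqrt (1 - sqnorm x)"
      using pos powr_mhalf[of "1 - sqnorm x"] by simp
    then show ?thesis unfolding fmap_def by (simp only: vec_eq_iff vec_lambda_beta divide_inverse) simp
  qed
  have o: "open (CH :: (complex^'n) set)" unfolding CH by (rule open_dom)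
  have "Ck_on k (fmap :: complex^'n \<Rightarrow> _) CH = Ck_on k ?g CH" for k
    using Ck_cong[OF o, of fmap ?g k] eq by blast
  then show ?thesis using sm unfolding smooth_on_def CH[symmetric] by blast
qed

lemma smooth_ginv: "smooth_on (inv_into CH fmap) (UNIV :: (complex^'n::finite) set)"
proof -
  let ?g = "\<lambda>x::complex^'n. \<chi> j. x$j * complex_of_real ((1 + 1 * sqnorm x) powr (-1/2))"
  have "smv 1 1 ?g" unfolding smv_def vec_lambda_beta by (intro allI sm.sm_mult sm.sm_coord sm.sm_pw)
  then have sm: "smooth_on ?g {x. 0 < 1 + 1 * sqnorm x}" by (rule smv_smooth)
  have U: "{x::complex^'n. 0 < 1 + 1 * sqnorm x} = UNIV"
    by (auto intro!: add_pos_nonneg sqnorm_nonneg)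
  have eq: "inv_into CH fmap x = ?g x" for x :: "complex^'n"
  proof -
    have pos: "0 < 1 + sqnorm x" by (auto intro!: add_pos_nonneg sqnorm_nonneg)
    have "(1 + 1 * sqnorm x) powr (-1/2) = 1 / sqrt (1 + sqnorm x)"
      using pos powr_mhalf[of "1 + sqnorm x"] by simp
    then show ?thesis unfolding inv_fmap ginv_def by (simp only: vec_eq_iff vec_lambda_beta divide_inverse) simp
  qed
  have "Ck_on k (inv_into CH (fmap :: complex^'n \<Rightarrow> _)) UNIV = Ck_on k ?g UNIV" for k
    using Ck_cong[OF open_UNIV, of "inv_into CH fmap" ?g k] eq by blast
  then show ?thesis using sm unfolding smooth_on_def U by blast
qed

lemma special_fmap: "special_on (CH :: (complex^'n::finite) set) fmap"
  unfolding special_on_def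
proof (intro conjI smooth_fmap exI[of _ "\<lambda>j y. 1 / sqrt (1 - (\<Sum>i\<in>UNIV. y$i))"] ballI)
  fix z :: "complex^'n" assume "z \<in> CH"
  show "fmap z = (\<chi> j. complex_of_real (1 / sqrt (1 - (\<Sum>i\<in>UNIV. (\<chi> i. (cmod (z$i))^2) $ i))) * z$j)"
    unfolding fmap_def sqnorm_def by (simp add: vec_eq_iff divide_inverse mult.commute)
qed



lemma hd_eq: "(f has_derivative f') F \<Longrightarrow> (\<And>w. f' w = g' w) \<Longrightarrow> (f has_derivative g') F"
proof -
  assume "(f has_derivative f') F" "\<And>w. f' w = g' w"
  moreover have "f' = g'" using calculation(2) by (rule ext)
  ultimately show ?thesis by simp
qed

lemma dcq_axis: "dcq x (axis k a) = a * cnj (x$k) + x$k * cnj a"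
proof -
  have "\<And>j. axis k a $ j * cnj (x$j) + x$j * cnj (axis k a $ j) = (if j = k then a * cnj (x$k) + x$k * cnj a else 0)"
    by (simp add: axis_def)
  then show ?thesis unfolding dcq_def by simp
qed

lemma g_deriv: "((\<lambda>x. 1 + s * sqnorm x) has_derivative (\<lambda>w. s * Re (dcq x w))) (at x)"
proof -
  have "((\<lambda>x. 1 + s * sqnorm x) has_derivative (\<lambda>w. 0 + s * Re (dcq x w))) (at x)"
    by (intro has_derivative_add has_derivative_const has_derivative_mult_right sqnorm_has_derivative)
  then show ?thesis by simp
qed

lemma Phi_deriv:
  assumes "0 < 1 + s * sqnorm x"
  shows "((\<lambda>x. complex_of_real (ln (1 + s * sqnorm x))) has_derivative
          (\<lambda>w. of_real (s / (1 + s * sqnorm x)) * dcq x w)) (at x)"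
proof -
  have "((\<lambda>x. ln (1 + s * sqnorm x)) has_derivative (\<lambda>w. s * Re (dcq x w) * inverse (1 + s * sqnorm x))) (at x)"
    by (rule DERIV_compose_FDERIV[OF DERIV_ln[OF assms] g_deriv])
  then have "((\<lambda>x. complex_of_real (ln (1 + s * sqnorm x))) has_derivative
          (\<lambda>w. of_real (s * Re (dcq x w) * inverse (1 + s * sqnorm x)))) (at x)"
    by (rule has_derivative_of_real)
  then show ?thesis
  proof (rule hd_eq)
    fix w
    have "of_real (s * Re (dcq x w) * inverse (1 + s * sqnorm x)) = of_real (s / (1 + s * sqnorm x)) * complex_of_real (Re (dcq x w))"
      by (simp add: divide_inverse)
    then show "of_real (s * Re (dcq x w) * inverse (1 + s * sqnorm x)) = of_real (s / (1 + s * sqnorm x)) * dcq x w"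
      by (simp add: dcq_real)
  qed
qed

lemma h_deriv:
  assumes "0 < 1 + s * sqnorm x"
  shows "((\<lambda>x. complex_of_real (s / (1 + s * sqnorm x)) * x$k) has_derivative
          (\<lambda>w. of_real (s / (1 + s * sqnorm x)) * w$k - of_real (s * s / (1 + s * sqnorm x)^2) * dcq x w * x$k)) (at x)"
proof -
  let ?c = "1 + s * sqnorm x"
  have "((\<lambda>x. s / (1 + s * sqnorm x)) has_derivative
     (\<lambda>h. - s * (inverse ?c * (s * Re (dcq x h)) * inverse ?c) + 0 / ?c)) (at x)"
    using assms by (intro has_derivative_divide has_derivative_const g_deriv) auto
  then have "((\<lambda>x. complex_of_real (s / (1 + s * sqnorm x))) has_derivative
     (\<lambda>h. of_real (- s * (inverse ?c * (s * Re (dcq x h)) * inverse ?c) + 0 / ?c))) (at x)"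
    by (rule has_derivative_of_real)
  then have "((\<lambda>x. complex_of_real (s / (1 + s * sqnorm x)) * x$k) has_derivative
     (\<lambda>h. of_real (s / ?c) * h$k + of_real (- s * (inverse ?c * (s * Re (dcq x h)) * inverse ?c) + 0 / ?c) * x$k)) (at x)"
    by (intro has_derivative_mult bounded_linear.has_derivative[OF bounded_linear_vec_nth has_derivative_ident])
  then show ?thesis
  proof (rule hd_eq)
    fix w
    have "complex_of_real (- s * (inverse ?c * (s * Re (dcq x w)) * inverse ?c) + 0 / ?c)
        = - of_real (s * s / ?c^2) * of_real (Re (dcq x w))"
      by (simp add: field_simps power2_eq_square)
    then show "of_real (s / ?c) * w$k + of_real (- s * (inverse ?c * (s * Re (dcq x w)) * inverse ?c) + 0 / ?c) * x$k
       = of_real (s / ?c) * w$k - of_real (s * s / ?c^2) * dcq x w * x$k"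
      by (simp add: dcq_real)
  qed
qed


lemma wirt_zbar_Phi:
  assumes phi: "\<And>x. \<phi> x = ln (1 + s * sqnorm x)" and x: "0 < 1 + s * sqnorm x"
  shows "wirt_zbar k (\<lambda>x. complex_of_real (\<phi> x)) x = of_real (s / (1 + s * sqnorm x)) * x$k"
proof -
  have e: "(\<lambda>x. complex_of_real (\<phi> x)) = (\<lambda>x. complex_of_real (ln (1 + s * sqnorm x)))"
    by (simp add: phi)
  have D: "frechet_derivative (\<lambda>x. complex_of_real (\<phi> x)) (at x) = (\<lambda>w. of_real (s / (1 + s * sqnorm x)) * dcq x w)"
    unfolding e by (rule frechet_derivative_at[OF Phi_deriv[OF x], symmetric])
  define r where "r = complex_of_real (s / (1 + s * sqnorm x))"
  show ?thesis unfolding wirt_zbar_def dirderiv_def D dcq_axis r_def[symmetric]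
    by (simp add: field_simps)
qed

lemma wirt_zz_Phi:
  assumes phi: "\<And>x. \<phi> x = ln (1 + s * sqnorm x)" and x: "0 < 1 + s * sqnorm x"
  shows "wirt_z j (wirt_zbar k (\<lambda>x. complex_of_real (\<phi> x))) x =
     (if j = k then of_real (s / (1 + s * sqnorm x)) else 0) - of_real (s * s / (1 + s * sqnorm x)^2) * cnj (x$j) * x$k"
proof -
  let ?S = "{x::complex^'a. 0 < 1 + s * sqnorm x}"
  have eq: "wirt_zbar k (\<lambda>x. complex_of_real (\<phi> x)) y = complex_of_real (s / (1 + s * sqnorm y)) * y$k"
    if "y \<in> ?S" for y
    using wirt_zbar_Phi[OF phi] that by simp
  have D: "frechet_derivative (wirt_zbar k (\<lambda>x. complex_of_real (\<phi> x))) (at x) =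
     (\<lambda>w. of_real (s / (1 + s * sqnorm x)) * w$k - of_real (s * s / (1 + s * sqnorm x)^2) * dcq x w * x$k)"
  proof -
    have "frechet_derivative (wirt_zbar k (\<lambda>x. complex_of_real (\<phi> x))) (at x) =
      frechet_derivative (\<lambda>y. complex_of_real (s / (1 + s * sqnorm y)) * y$k) (at x)"
      by (rule frechet_cong_open[OF open_dom[of 1 s]]) (use x eq in auto)
    then show ?thesis using frechet_derivative_at[OF h_deriv[OF x], symmetric] by simp
  qed
  define r where "r = complex_of_real (s / (1 + s * sqnorm x))"
  define m where "m = complex_of_real (s * s / (1 + s * sqnorm x)^2)"
  show ?thesis unfolding wirt_z_def dirderiv_def D dcq_axis r_def[symmetric] m_def[symmetric]
    by (simp add: field_simps axis_def)
qed


definition ip :: "complex^'n::finite \<Rightarrow> complex^'n \<Rightarrow> complex" where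
  "ip a b = (\<Sum>j\<in>UNIV. cnj (a$j) * b$j)"

lemma ddbar_sum:
  "(\<Sum>j\<in>UNIV. \<Sum>k\<in>UNIV. ((if j = k then A else 0) - B * cnj (p$j) * p$k) * wedge (dz j) (dzbar k) u v)
   = A * (ip v u - ip u v) - B * (ip p u * ip v p - ip p v * ip u p)"
proof -
  have 1: "((if j = k then A else 0) - B * cnj (p$j) * p$k) * wedge (dz j) (dzbar k) u v =
     (if j = k then A * (u$j * cnj (v$j) - v$j * cnj (u$j)) else 0)
      - B * ((cnj (p$j) * u$j) * (cnj (v$k) * p$k)) + B * ((cnj (p$j) * v$j) * (cnj (u$k) * p$k))" for j k
    by (simp add: wedge_def dz_def dzbar_def algebra_simps)
  have P1: "ip p u * ip v p = (\<Sum>j\<in>UNIV. \<Sum>k\<in>UNIV. (cnj (p$j) * u$j) * (cnj (v$k) * p$k))"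
    unfolding ip_def by (rule sum_product)
  have P2: "ip p v * ip u p = (\<Sum>j\<in>UNIV. \<Sum>k\<in>UNIV. (cnj (p$j) * v$j) * (cnj (u$k) * p$k))"
    unfolding ip_def by (rule sum_product)
  have W: "ip v u - ip u v = (\<Sum>j\<in>UNIV. u$j * cnj (v$j) - v$j * cnj (u$j))"
    unfolding ip_def by (simp add: sum_subtractf mult.commute)
  show ?thesis
    unfolding 1 P1 P2 W
    by (simp add: sum.distrib sum_subtractf sum_distrib_left algebra_simps)
qed


lemma i_ddbar_Phi:
  assumes phi: "\<And>x. \<phi> x = ln (1 + s * sqnorm x)" and x: "0 < 1 + s * sqnorm x"
  shows "i_ddbar \<phi> x u v = \<i> / 2 * (of_real (s / (1 + s * sqnorm x)) * (ip v u - ip u v)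
     - of_real (s * s / (1 + s * sqnorm x)^2) * (ip x u * ip v x - ip x v * ip u x))"
  unfolding i_ddbar_def wirt_zz_Phi[OF phi x] ddbar_sum ..

definition Dfm :: "complex^'n::finite \<Rightarrow> complex^'n \<Rightarrow> complex^'n" where
  "Dfm p u = (\<chi> j. of_real (1 / sqrt (1 - sqnorm p)) * u$j
      + of_real (1 / (2 * sqrt (1 - sqnorm p)^3)) * dcq p u * p$j)"

lemma alg_fd: "(R::real) \<noteq> 0 \<Longrightarrow> - a * (inverse (complex_of_real R) * of_real ((0 - D) * (inverse R / 2)) * inverse (complex_of_real R))
          + b / complex_of_real R = of_real (1 / R) * b + of_real (1 / (2 * R^3)) * of_real D * a"
  by (simp add: field_simps power3_eq_cube)

lemma fmap_comp_deriv:
  assumes p: "sqnorm p < 1"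
  shows "((\<lambda>x. fmap x $ j) has_derivative (\<lambda>u. Dfm p u $ j)) (at p)"
proof -
  let ?R = "sqrt (1 - sqnorm p)"
  have R: "0 < ?R" using p by simp
  have a: "((\<lambda>x. 1 - sqnorm x) has_derivative (\<lambda>w. 0 - Re (dcq p w))) (at p)"
    by (intro has_derivative_diff has_derivative_const sqnorm_has_derivative)
  have b: "((\<lambda>x. sqrt (1 - sqnorm x)) has_derivative (\<lambda>w. (0 - Re (dcq p w)) * (inverse ?R / 2))) (at p)"
    by (rule DERIV_compose_FDERIV[OF DERIV_real_sqrt a]) (use p in simp)
  have c: "((\<lambda>x. complex_of_real (sqrt (1 - sqnorm x))) has_derivative (\<lambda>w. of_real ((0 - Re (dcq p w)) * (inverse ?R / 2)))) (at p)"
    by (rule has_derivative_of_real[OF b])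
  have d: "((\<lambda>x. x$j / complex_of_real (sqrt (1 - sqnorm x))) has_derivative
     (\<lambda>h. - p$j * (inverse (complex_of_real ?R) * of_real ((0 - Re (dcq p h)) * (inverse ?R / 2)) * inverse (complex_of_real ?R))
          + h$j / complex_of_real ?R)) (at p)"
    by (rule has_derivative_divide[OF bounded_linear.has_derivative[OF bounded_linear_vec_nth has_derivative_ident] c])
       (use R in simp)
  show ?thesis unfolding fmap_def vec_lambda_beta
  proof (rule hd_eq[OF d])
    fix h
    define D where "D = Re (dcq p h)"
    have "- p$j * (inverse (complex_of_real ?R) * of_real ((0 - D) * (inverse ?R / 2)) * inverse (complex_of_real ?R))
          + h$j / complex_of_real ?R = of_real (1 / ?R) * h$j + of_real (1 / (2 * ?R^3)) * of_real D * p$j"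
      using R by (intro alg_fd) simp
    then show "- p$j * (inverse (complex_of_real ?R) * of_real ((0 - Re (dcq p h)) * (inverse ?R / 2)) * inverse (complex_of_real ?R))
          + h$j / complex_of_real ?R = Dfm p h $ j"
      unfolding Dfm_def D_def dcq_real by simp
  qed
qed

lemma fmap_deriv: "sqnorm p < 1 \<Longrightarrow> (fmap has_derivative Dfm p) (at p)"
  by (rule has_derivative_vec) (rule fmap_comp_deriv)

lemma frechet_fmap: "p \<in> CH \<Longrightarrow> frechet_derivative fmap (at p) = Dfm p"
  unfolding CH_def using fmap_deriv frechet_derivative_at by fastforce



lemma alg_hyp:
  fixes a k Xvu Xuv Pu Pu' Pv Pv' Q :: complex and R q :: real
  assumes R: "R > 0" "R^2 = 1 - q" and a: "a = of_real (1/R)" and k: "k = of_real (1/(2*R^3))" and Q: "Q = of_real q"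
  shows "\<i>/2 * ((a*(a*Xvu + (k*(Pu+Pu'))*Pv') + (k*(Pv+Pv'))*(a*Pu + (k*(Pu+Pu'))*Q))
              - (a*(a*Xuv + (k*(Pv+Pv'))*Pu') + (k*(Pu+Pu'))*(a*Pv + (k*(Pv+Pv'))*Q)))
   = - (\<i>/2 * (of_real (-1 / (1 + -1*q)) * (Xvu - Xuv) - of_real ((-1)*(-1) / (1 + -1*q)^2) * (Pu*Pv' - Pv*Pu')))"
proof -
  have q: "q = 1 - R^2" using R by simp
  have R0: "complex_of_real R \<noteq> 0" using R by simp
  show ?thesis unfolding a k Q q using R0
    by (simp add: field_simps power2_eq_square power3_eq_cube)
qed

lemma alg_FS:
  fixes a k Xvu Xuv Pu Pu' Pv Pv' Q :: complex and R q qw :: real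
  assumes R: "R > 0" "R^2 = 1 - q" and a: "a = of_real (1/R)" and k: "k = of_real (1/(2*R^3))" and Q: "Q = of_real q"
    and qw: "qw = q / (1 - q)"
  shows "\<i>/2 * (of_real (1 / (1 + 1*qw)) * ((a*(a*Xvu + (k*(Pu+Pu'))*Pv') + (k*(Pv+Pv'))*(a*Pu + (k*(Pu+Pu'))*Q))
              - (a*(a*Xuv + (k*(Pv+Pv'))*Pu') + (k*(Pu+Pu'))*(a*Pv + (k*(Pv+Pv'))*Q)))
     - of_real (1*1 / (1 + 1*qw)^2) * ((a*(a*Pu + (k*(Pu+Pu'))*Q)) * (a*(a*Pv' + (k*(Pv+Pv'))*Q))
                                   - (a*(a*Pv + (k*(Pv+Pv'))*Q)) * (a*(a*Pu' + (k*(Pu+Pu'))*Q))))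
   = \<i>/2 * (Xvu - Xuv)"
proof -
  have q: "q = 1 - R^2" using R by simp
  have qw': "1 + 1*qw = 1 / R^2" using R unfolding qw q by (simp add: field_simps)
  have R0: "complex_of_real R \<noteq> 0" using R by simp
  show ?thesis unfolding a k Q qw' q using R0
    by (simp add: field_simps power2_eq_square power3_eq_cube)
qed


lemma wsum: "(\<Sum>j\<in>UNIV. wedge (dz j) (dzbar j) u v) = ip v u - ip u v"
  unfolding ip_def wedge_def dz_def dzbar_def by (simp add: sum_subtractf mult.commute)

lemma ipl: "ip (\<chi> j. x * y$j + z * w$j) t = cnj x * ip y t + cnj z * ip w t"
  unfolding ip_def by (simp add: sum.distrib sum_distrib_left algebra_simps)

lemma ipr: "ip t (\<chi> j. x * y$j + z * w$j) = x * ip t y + z * ip t w"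
  unfolding ip_def by (simp add: sum.distrib sum_distrib_left algebra_simps)

lemma ipl1: "ip (\<chi> j. x * y$j) t = cnj x * ip y t"
  unfolding ip_def by (simp add: sum_distrib_left algebra_simps)

lemma ipr1: "ip t (\<chi> j. x * y$j) = x * ip t y"
  unfolding ip_def by (simp add: sum_distrib_left algebra_simps)

lemma dcq_ip: "dcq p u = ip p u + ip u p"
  unfolding dcq_def ip_def by (simp add: sum.distrib mult.commute)

lemma ip_pp: "ip p p = of_real (sqnorm p)"
  unfolding ip_def cq_sqnorm[symmetric] cq_def by (simp add: mult.commute)

theorem lemma2p2:
  shows "special_on (CH :: (complex^'n::finite) set) fmap
    \<and> diffeo_between (fmap :: complex^'n \<Rightarrow> complex^'n) CH UNIV
    \<and> (\<forall>p\<in>(CH :: (complex^'n) set). \<forall>u v. pullback fmap omega0 p u v = omega_hyp p u v)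
    \<and> (\<forall>p\<in>(CH :: (complex^'n) set). \<forall>u v. pullback fmap omega_FS p u v = omega0 p u v)"
proof (intro conjI ballI allI)
  show "special_on (CH :: (complex^'n::finite) set) fmap" by (rule special_fmap)
  show "diffeo_between (fmap :: complex^'n \<Rightarrow> complex^'n) CH UNIV"
    unfolding diffeo_between_def using bij_fmap smooth_fmap smooth_ginv by blast
next
  fix p u v :: "complex^'n" assume p: "p \<in> CH"
  define R where "R = sqrt (1 - sqnorm p)"
  define a where "a = complex_of_real (1 / R)"
  define k where "k = complex_of_real (1 / (2 * R^3))"
  have q1: "sqnorm p < 1" using p unfolding CH_def by simp
  have R: "R > 0" "R^2 = 1 - sqnorm p" using q1 unfolding R_def by simp_all
  have Dfm_alt: "Dfm p x = (\<chi> j. a * x$j + (k * (ip p x + ip x p)) * p$j)" for x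
    unfolding Dfm_def a_def k_def R_def dcq_ip by (simp add: mult.assoc)
  have ca: "cnj a = a" unfolding a_def by simp
  have cb: "cnj (k * (ip p x + ip x p)) = k * (ip p x + ip x p)" for x
    unfolding k_def dcq_ip[symmetric] by (simp add: cnj_dcq)
  have fm: "fmap p = (\<chi> j. a * p$j)"
    unfolding fmap_def a_def R_def by (simp add: vec_eq_iff divide_inverse mult.commute)
  have e0: "pullback fmap omega0 p u v = \<i>/2 * (ip (Dfm p v) (Dfm p u) - ip (Dfm p u) (Dfm p v))"
    unfolding pullback_def frechet_fmap[OF p] omega0_def wsum ..
  have eBA: "ip (Dfm p v) (Dfm p u) = a*(a*ip v u + (k*(ip p u+ip u p))*ip v p) + (k*(ip p v+ip v p))*(a*ip p u + (k*(ip p u+ip u p))* of_real (sqnorm p))"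
    unfolding Dfm_alt ipl ca cb ipr ip_pp by (simp add: algebra_simps)
  have eAB: "ip (Dfm p u) (Dfm p v) = a*(a*ip u v + (k*(ip p v+ip v p))*ip u p) + (k*(ip p u+ip u p))*(a*ip p v + (k*(ip p v+ip v p))* of_real (sqnorm p))"
    unfolding Dfm_alt ipl ca cb ipr ip_pp by (simp add: algebra_simps)
  show "pullback fmap omega0 p u v = omega_hyp p u v"
  proof -
    have phi: "ln (1 - sqnorm x) = ln (1 + -1 * sqnorm x)" for x :: "complex^'n" by simp
    have x: "0 < 1 + -1 * sqnorm p" using q1 by simp
    have eh: "omega_hyp p u v = - (\<i> / 2 * (of_real (-1 / (1 + -1 * sqnorm p)) * (ip v u - ip u v)
     - of_real (-1 * -1 / (1 + -1 * sqnorm p)^2) * (ip p u * ip v p - ip p v * ip u p)))"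
      unfolding omega_hyp_def i_ddbar_Phi[where s="-1", OF phi x] ..
    show ?thesis unfolding e0 eBA eAB eh
      by (rule alg_hyp[OF R a_def k_def refl])
  qed
  show "pullback fmap omega_FS p u v = omega0 p u v"
  proof -
    have phi: "ln (1 + sqnorm x) = ln (1 + 1 * sqnorm x)" for x :: "complex^'n" by simp
    have x: "0 < 1 + 1 * sqnorm (fmap p)" using sqnorm_nonneg[of "fmap p"] by simp
    have e1: "pullback fmap omega_FS p u v = \<i> / 2 * (of_real (1 / (1 + 1 * sqnorm (fmap p))) * (ip (Dfm p v) (Dfm p u) - ip (Dfm p u) (Dfm p v))
     - of_real (1 * 1 / (1 + 1 * sqnorm (fmap p))^2) * (ip (fmap p) (Dfm p u) * ip (Dfm p v) (fmap p) - ip (fmap p) (Dfm p v) * ip (Dfm p u) (fmap p)))"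
      unfolding pullback_def frechet_fmap[OF p] omega_FS_def i_ddbar_Phi[where s=1, OF phi x] ..
    have f1: "ip (fmap p) (Dfm p x) = a*(a*ip p x + (k*(ip p x+ip x p))* of_real (sqnorm p))" for x
      unfolding fm Dfm_alt ipl1 ca ipr ip_pp by (simp add: algebra_simps)
    have f2: "ip (Dfm p x) (fmap p) = a*(a*ip x p + (k*(ip p x+ip x p))* of_real (sqnorm p))" for x
    proof -
      have "ip (Dfm p x) (fmap p) = a * ip (Dfm p x) p" unfolding fm ipr1 ..
      also have "\<dots> = a*(a*ip x p + (k*(ip p x+ip x p))* of_real (sqnorm p))"
        unfolding Dfm_alt ipl ca cb ip_pp by (simp add: algebra_simps)
      finally show ?thesis .
    qed
    have e2: "omega0 p u v = \<i>/2 * (ip v u - ip u v)"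
      unfolding omega0_def wsum ..
    show ?thesis unfolding e1 eBA eAB f1 f2 e2
      by (rule alg_FS[OF R a_def k_def refl sqnorm_fmap[OF p]])
  qed
qed

end
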